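(* Let $M$ be a timelike surface in $\mathbb{R}^{3,1}$ with a canonical null direction with respect to a constant unit spacelike vector $Z$, such that $II(Z^\top,Z^\top)\neq0$ everywhere. Then, in the orthonormal normal frame $(Z^\perp,\nu)$, $$II(W,W)=\frac{K_N}{|II(Z^\top,Z^\top)|}\,Z^\perp+\frac{|\vec H|^2-K}{|II(Z^\top,Z^\top)|}\,\nu .$$ In particular $|II(W,W)|^2\,|II(Z^\top,Z^\top)|^2=(|\vec H|^2-K)^2+K_N^2$.
   Context: $\mathbb{R}^{3,1}$ is $\mathbb{R}^{4}$ with the metric $-dx_1^2+dx_2^2+dx_3^2+dx_4^2$. A surface is timelike if the induced metric has signature $(1,1)$ (its normal bundle is then spacelike); a vector $v$ is lightlike if $v\ne0$ and $\langle v,v\rangle=0$. For a constant vector $Z$, $Z=Z^\top+Z^\perp$ along $M$; $M$ has a canonical null direction with respect to $Z$ if $Z^\top$ is lightlike everywhere on $M$. $W$ is the unique lightlike tangent field with $\langle Z^\top,W\rangle=-1$; $II$ is the second fundamental form, $A_\xi$ the shape operator ($\langle A_\xi X,Y\rangle=\langle II(X,Y),\xi\rangle$), $\vec H=\frac12\operatorname{tr}II$ the mean curvature vector, $|\vec H|^2=\langle\vec H,\vec H\rangle$, $K$ the Gaussian curvature. $\nu:=II(Z^\top,Z^\top)/|II(Z^\top,Z^\top)|$, $e_1=(Z^\top+W)/\sqrt2$, $e_2=(Z^\top-W)/\sqrt2$, and the normal curvature is $K_N:=\langle (A_{Z^\perp}\circ A_\nu-A_\nu\circ A_{Z^\perp})(e_1),e_2\rangle$.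 *)

theory Defs
  imports "HOL-Analysis.Analysis"
begin

definition mink :: "real^4 \<Rightarrow> real^4 \<Rightarrow> real" where
  "mink x y = - (x$1 * y$1) + x$2 * y$2 + x$3 * y$3 + x$4 * y$4"

text \<open>Surfaces are given locally by a parametrisation f : U \<subseteq> R^2 \<rightarrow> R^{3,1}.
  Partial derivative in the i-th coordinate direction.\<close>
definition pd :: "2 \<Rightarrow> (real^2 \<Rightarrow> 'b::real_normed_vector) \<Rightarrow> real^2 \<Rightarrow> 'b" where
  "pd i g u = frechet_derivative g (at u) (axis i 1)"

fun pds :: "2 list \<Rightarrow> (real^2 \<Rightarrow> 'b::real_normed_vector) \<Rightarrow> real^2 \<Rightarrow> 'b" where
  "pds [] g = g"
| "pds (i # is) g = pd i (pds is g)"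

definition smooth_on_param :: "(real^2) set \<Rightarrow> (real^2 \<Rightarrow> real^4) \<Rightarrow> bool" where
  "smooth_on_param U f = (\<forall>ks. \<forall>u\<in>U. pds ks f differentiable (at u))"

definition other :: "2 \<Rightarrow> 2" where "other i = (if i = 1 then 2 else 1)"

definition gmet :: "(real^2 \<Rightarrow> real^4) \<Rightarrow> real^2 \<Rightarrow> 2 \<Rightarrow> 2 \<Rightarrow> real" where
  "gmet f u i j = mink (pd i f u) (pd j f u)"

definition gdet :: "(real^2 \<Rightarrow> real^4) \<Rightarrow> real^2 \<Rightarrow> real" where
  "gdet f u = gmet f u 1 1 * gmet f u 2 2 - gmet f u 1 2 * gmet f u 2 1"

definition ginv :: "(real^2 \<Rightarrow> real^4) \<Rightarrow> real^2 \<Rightarrow> 2 \<Rightarrow> 2 \<Rightarrow> real" where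
  "ginv f u i j = (if i = j then gmet f u (other i) (other i) else - gmet f u i j) / gdet f u"

text \<open>Timelike surface: induced metric of signature (1,1), i.e. negative Gram determinant.\<close>
definition timelike_param :: "(real^2) set \<Rightarrow> (real^2 \<Rightarrow> real^4) \<Rightarrow> bool" where
  "timelike_param U f = (\<forall>u\<in>U. gdet f u < 0)"

definition TS :: "(real^2 \<Rightarrow> real^4) \<Rightarrow> real^2 \<Rightarrow> (real^4) set" where
  "TS f u = span {pd 1 f u, pd 2 f u}"

definition tanp :: "(real^2 \<Rightarrow> real^4) \<Rightarrow> real^2 \<Rightarrow> real^4 \<Rightarrow> real^4" where
  "tanp f u v = (\<Sum>i\<in>UNIV. \<Sum>j\<in>UNIV. (ginv f u i j * mink v (pd j f u)) *\<^sub>R pd i f u)"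

definition norp :: "(real^2 \<Rightarrow> real^4) \<Rightarrow> real^2 \<Rightarrow> real^4 \<Rightarrow> real^4" where
  "norp f u v = v - tanp f u v"

definition tcoord :: "(real^2 \<Rightarrow> real^4) \<Rightarrow> real^2 \<Rightarrow> real^4 \<Rightarrow> 2 \<Rightarrow> real" where
  "tcoord f u X i = (\<Sum>j\<in>UNIV. ginv f u i j * mink X (pd j f u))"

definition IIf :: "(real^2 \<Rightarrow> real^4) \<Rightarrow> real^2 \<Rightarrow> real^4 \<Rightarrow> real^4 \<Rightarrow> real^4" where
  "IIf f u X Y = (\<Sum>i\<in>UNIV. \<Sum>j\<in>UNIV.
      (tcoord f u X i * tcoord f u Y j) *\<^sub>R norp f u (pd i (pd j f) u))"

definition meanH :: "(real^2 \<Rightarrow> real^4) \<Rightarrow> real^2 \<Rightarrow> real^4" where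
  "meanH f u = (1/2) *\<^sub>R (\<Sum>i\<in>UNIV. \<Sum>j\<in>UNIV. ginv f u i j *\<^sub>R norp f u (pd i (pd j f) u))"

definition shape :: "(real^2 \<Rightarrow> real^4) \<Rightarrow> real^2 \<Rightarrow> real^4 \<Rightarrow> real^4 \<Rightarrow> real^4" where
  "shape f u \<xi> X = (THE v. v \<in> TS f u \<and> (\<forall>Y\<in>TS f u. mink v Y = mink (IIf f u X Y) \<xi>))"

text \<open>Levi-Civita connection of the induced metric (tangential part of ambient derivative),
  curvature R(d1,d2)d2 and Gaussian (sectional) curvature K = <R(d1,d2)d2,d1>/(g11 g22 - g12^2).\<close>
definition covd :: "(real^2 \<Rightarrow> real^4) \<Rightarrow> real^2 \<Rightarrow> (real^2 \<Rightarrow> real^4) \<Rightarrow> 2 \<Rightarrow> real^4" where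
  "covd f u V i = tanp f u (pd i V u)"

definition riem122 :: "(real^2 \<Rightarrow> real^4) \<Rightarrow> real^2 \<Rightarrow> real^4" where
  "riem122 f u = covd f u (\<lambda>v. tanp f v (pd 2 (pd 2 f) v)) 1
               - covd f u (\<lambda>v. tanp f v (pd 1 (pd 2 f) v)) 2"

definition gaussK :: "(real^2 \<Rightarrow> real^4) \<Rightarrow> real^2 \<Rightarrow> real" where
  "gaussK f u = mink (riem122 f u) (pd 1 f u) / gdet f u"

definition canonical_null :: "(real^2) set \<Rightarrow> (real^2 \<Rightarrow> real^4) \<Rightarrow> real^4 \<Rightarrow> bool" where
  "canonical_null U f Z = (\<forall>u\<in>U. tanp f u Z \<noteq> 0 \<and> mink (tanp f u Z) (tanp f u Z) = 0)"

definition Wf :: "(real^2 \<Rightarrow> real^4) \<Rightarrow> real^4 \<Rightarrow> real^2 \<Rightarrow> real^4" where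
  "Wf f Z u = (THE w. w \<in> TS f u \<and> w \<noteq> 0 \<and> mink w w = 0 \<and> mink (tanp f u Z) w = -1)"

definition lnorm :: "real^4 \<Rightarrow> real" where "lnorm v = sqrt (mink v v)"

definition nuf :: "(real^2 \<Rightarrow> real^4) \<Rightarrow> real^4 \<Rightarrow> real^2 \<Rightarrow> real^4" where
  "nuf f Z u = (1 / lnorm (IIf f u (tanp f u Z) (tanp f u Z))) *\<^sub>R IIf f u (tanp f u Z) (tanp f u Z)"

definition e1f :: "(real^2 \<Rightarrow> real^4) \<Rightarrow> real^4 \<Rightarrow> real^2 \<Rightarrow> real^4" where
  "e1f f Z u = (1 / sqrt 2) *\<^sub>R (tanp f u Z + Wf f Z u)"

definition e2f :: "(real^2 \<Rightarrow> real^4) \<Rightarrow> real^4 \<Rightarrow> real^2 \<Rightarrow> real^4" where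
  "e2f f Z u = (1 / sqrt 2) *\<^sub>R (tanp f u Z - Wf f Z u)"

definition KNf :: "(real^2 \<Rightarrow> real^4) \<Rightarrow> real^4 \<Rightarrow> real^2 \<Rightarrow> real" where
  "KNf f Z u = mink (shape f u (norp f u Z) (shape f u (nuf f Z u) (e1f f Z u))
                    - shape f u (nuf f Z u) (shape f u (norp f u Z) (e1f f Z u))) (e2f f Z u)"

end

theory Submission
  imports Defs
begin


lemma line_deriv:
  fixes F :: "real^2 \<Rightarrow> real^4"
  assumes "F differentiable (at (p + x0 *\<^sub>R e))"
  shows "((\<lambda>x. F (p + x *\<^sub>R e) \<bullet> c) has_real_derivative (frechet_derivative F (at (p + x0 *\<^sub>R e)) e \<bullet> c)) (at x0)"
proof -
  let ?q = "p + x0 *\<^sub>R e"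
  let ?F' = "frechet_derivative F (at ?q)"
  have d: "(F has_derivative ?F') (at ?q)" using assms frechet_derivative_works by blast
  have lin: "linear ?F'" using assms linear_frechet_derivative by blast
  have l: "((\<lambda>x. p + x *\<^sub>R e) has_derivative (\<lambda>x. x *\<^sub>R e)) (at x0)"
    by (auto intro!: derivative_eq_intros)
  have "((\<lambda>x. F (p + x *\<^sub>R e)) has_derivative (\<lambda>x. ?F' (x *\<^sub>R e))) (at x0)"
    by (rule has_derivative_compose[OF l d])
  then have "((\<lambda>x. F (p + x *\<^sub>R e) \<bullet> c) has_derivative (\<lambda>x. ?F' (x *\<^sub>R e) \<bullet> c)) (at x0)"
    by (rule has_derivative_inner_left)
  moreover have "(\<lambda>x. ?F' (x *\<^sub>R e) \<bullet> c) = (\<lambda>x. (?F' e \<bullet> c) * x)"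
    using lin by (auto simp: linear_scale)
  ultimately show ?thesis by (simp add: has_field_derivative_def)
qed




definition PP :: "real^2 \<Rightarrow> real \<Rightarrow> real \<Rightarrow> real^2" where
  "PP u a b = u + a *\<^sub>R axis 1 1 + b *\<^sub>R axis 2 1"

lemma D1:
  fixes F :: "real^2 \<Rightarrow> real^4"
  assumes "F differentiable (at (PP u x b))"
  shows "((\<lambda>x. F (PP u x b) \<bullet> c) has_real_derivative (pd 1 F (PP u x b) \<bullet> c)) (at x)"
proof -
  have e: "\<And>x. PP u x b = (u + b *\<^sub>R axis 2 1) + x *\<^sub>R axis 1 1" by (simp add: PP_def algebra_simps)
  show ?thesis using line_deriv[of F "u + b *\<^sub>R axis 2 1" x "axis 1 1" c] assms
    unfolding e pd_def by simp
qed

lemma D2: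
  fixes F :: "real^2 \<Rightarrow> real^4"
  assumes "F differentiable (at (PP u a x))"
  shows "((\<lambda>x. F (PP u a x) \<bullet> c) has_real_derivative (pd 2 F (PP u a x) \<bullet> c)) (at x)"
proof -
  have e: "\<And>x. PP u a x = (u + a *\<^sub>R axis 1 1) + x *\<^sub>R axis 2 1" by (simp add: PP_def algebra_simps)
  show ?thesis using line_deriv[of F "u + a *\<^sub>R axis 1 1" x "axis 2 1" c] assms
    unfolding e pd_def by simp
qed

lemma PP_near:
  assumes "0 \<le> a" "a \<le> h" "0 \<le> b" "b \<le> h"
  shows "dist (PP u a b) u \<le> 2 * h"
proof -
  have "dist (PP u a b) u = norm (a *\<^sub>R (axis 1 1 :: real^2) + b *\<^sub>R axis 2 1)"
    by (simp add: PP_def dist_norm)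
  also have "\<dots> \<le> norm (a *\<^sub>R (axis 1 1 :: real^2)) + norm (b *\<^sub>R (axis 2 1 :: real^2))"
    by (rule norm_triangle_ineq)
  also have "\<dots> = a + b" using assms by simp
  finally show ?thesis using assms by simp
qed

lemma mvt_h:
  fixes f f' :: "real \<Rightarrow> real"
  assumes "0 < h" "\<And>x. 0 \<le> x \<Longrightarrow> x \<le> h \<Longrightarrow> DERIV f x :> f' x"
  obtains z where "0 < z" "z < h" "f h - f 0 = h * f' z"
  using MVT2[of 0 h f f'] assms by auto

lemma schwarz_pts:
  fixes g :: "real^2 \<Rightarrow> real^4"
  assumes h: "0 < h" and sub: "\<And>a b. 0 \<le> a \<Longrightarrow> a \<le> h \<Longrightarrow> 0 \<le> b \<Longrightarrow> b \<le> h \<Longrightarrow> PP u a b \<in> U"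
   and d0: "\<forall>v\<in>U. g differentiable (at v)"
   and d1: "\<forall>v\<in>U. pd 1 g differentiable (at v)"
   and d2: "\<forall>v\<in>U. pd 2 g differentiable (at v)"
  shows "\<exists>a b a' b'. 0 < a \<and> a < h \<and> 0 < b \<and> b < h \<and> 0 < a' \<and> a' < h \<and> 0 < b' \<and> b' < h \<and>
     pd 2 (pd 1 g) (PP u a b) \<bullet> c = pd 1 (pd 2 g) (PP u a' b') \<bullet> c"
proof -
  define \<Delta> where "\<Delta> = g (PP u h h) \<bullet> c - g (PP u h 0) \<bullet> c - g (PP u 0 h) \<bullet> c + g (PP u 0 0) \<bullet> c"
  obtain \<xi> where \<xi>: "0 < \<xi>" "\<xi> < h" and e1: "(\<lambda>x. g (PP u x h) \<bullet> c - g (PP u x 0) \<bullet> c) h - (\<lambda>x. g (PP u x h) \<bullet> c - g (PP u x 0) \<bullet> c) 0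
      = h * (\<lambda>x. pd 1 g (PP u x h) \<bullet> c - pd 1 g (PP u x 0) \<bullet> c) \<xi>"
    by (rule mvt_h[OF h, of "\<lambda>x. g (PP u x h) \<bullet> c - g (PP u x 0) \<bullet> c" "\<lambda>x. pd 1 g (PP u x h) \<bullet> c - pd 1 g (PP u x 0) \<bullet> c"]) (auto intro!: derivative_eq_intros D1 d0[rule_format] sub)
  have e1: "\<Delta> = h * (pd 1 g (PP u \<xi> h) \<bullet> c - pd 1 g (PP u \<xi> 0) \<bullet> c)"
    using e1 unfolding \<Delta>_def by simp
  obtain \<eta> where \<eta>: "0 < \<eta>" "\<eta> < h" and e2: "(\<lambda>y. pd 1 g (PP u \<xi> y) \<bullet> c) h - (\<lambda>y. pd 1 g (PP u \<xi> y) \<bullet> c) 0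
      = h * (\<lambda>y. pd 2 (pd 1 g) (PP u \<xi> y) \<bullet> c) \<eta>"
    by (rule mvt_h[OF h, of "\<lambda>y. pd 1 g (PP u \<xi> y) \<bullet> c" "\<lambda>y. pd 2 (pd 1 g) (PP u \<xi> y) \<bullet> c"]) (use \<xi> in \<open>auto intro!: D2 d1[rule_format] sub\<close>)
  have e2: "\<Delta> = h * (h * (pd 2 (pd 1 g) (PP u \<xi> \<eta>) \<bullet> c))"
    using e1 e2 by simp
  obtain \<eta>' where \<eta>': "0 < \<eta>'" "\<eta>' < h" and e3: "(\<lambda>y. g (PP u h y) \<bullet> c - g (PP u 0 y) \<bullet> c) h - (\<lambda>y. g (PP u h y) \<bullet> c - g (PP u 0 y) \<bullet> c) 0
      = h * (\<lambda>y. pd 2 g (PP u h y) \<bullet> c - pd 2 g (PP u 0 y) \<bullet> c) \<eta>'"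
    by (rule mvt_h[OF h, of "\<lambda>y. g (PP u h y) \<bullet> c - g (PP u 0 y) \<bullet> c" "\<lambda>y. pd 2 g (PP u h y) \<bullet> c - pd 2 g (PP u 0 y) \<bullet> c"]) (auto intro!: derivative_eq_intros D2 d0[rule_format] sub)
  have e3: "\<Delta> = h * (pd 2 g (PP u h \<eta>') \<bullet> c - pd 2 g (PP u 0 \<eta>') \<bullet> c)"
    using e3 unfolding \<Delta>_def by simp
  obtain \<xi>' where \<xi>': "0 < \<xi>'" "\<xi>' < h" and e4: "(\<lambda>x. pd 2 g (PP u x \<eta>') \<bullet> c) h - (\<lambda>x. pd 2 g (PP u x \<eta>') \<bullet> c) 0
      = h * (\<lambda>x. pd 1 (pd 2 g) (PP u x \<eta>') \<bullet> c) \<xi>'"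
    by (rule mvt_h[OF h, of "\<lambda>x. pd 2 g (PP u x \<eta>') \<bullet> c" "\<lambda>x. pd 1 (pd 2 g) (PP u x \<eta>') \<bullet> c"]) (use \<eta>' in \<open>auto intro!: D1 d2[rule_format] sub\<close>)
  have e4: "\<Delta> = h * (h * (pd 1 (pd 2 g) (PP u \<xi>' \<eta>') \<bullet> c))"
    using e3 e4 by simp
  have "pd 2 (pd 1 g) (PP u \<xi> \<eta>) \<bullet> c = pd 1 (pd 2 g) (PP u \<xi>' \<eta>') \<bullet> c"
    using e2 e4 h by simp
  then show ?thesis using \<xi> \<eta> \<xi>' \<eta>' by blast
qed

lemma schwarz:
  fixes g :: "real^2 \<Rightarrow> real^4"
  assumes U: "open U" "u \<in> U"
   and d0: "\<forall>v\<in>U. g differentiable (at v)"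
   and d1: "\<forall>v\<in>U. pd 1 g differentiable (at v)"
   and d2: "\<forall>v\<in>U. pd 2 g differentiable (at v)"
   and c12: "pd 1 (pd 2 g) differentiable (at u)"
   and c21: "pd 2 (pd 1 g) differentiable (at u)"
  shows "pd 1 (pd 2 g) u = pd 2 (pd 1 g) u"
proof -
  obtain r where r: "r > 0" "ball u r \<subseteq> U" using U open_contains_ball by blast
  have key: "pd 2 (pd 1 g) u \<bullet> c = pd 1 (pd 2 g) u \<bullet> c" for c
  proof (rule ccontr)
    let ?A = "pd 2 (pd 1 g) u \<bullet> c" and ?B = "pd 1 (pd 2 g) u \<bullet> c"
    assume ne: "?A \<noteq> ?B"
    define \<epsilon> where "\<epsilon> = \<bar>?A - ?B\<bar> / 2"
    have \<epsilon>: "\<epsilon> > 0" using ne by (simp add: \<epsilon>_def)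
    have "continuous (at u) (\<lambda>v. pd 2 (pd 1 g) v \<bullet> c)"
      by (intro continuous_intros differentiable_imp_continuous_within c21)
    then obtain e1 where e1: "e1 > 0" "\<And>v. dist v u < e1 \<Longrightarrow> dist (pd 2 (pd 1 g) v \<bullet> c) ?A < \<epsilon>"
      unfolding continuous_at_eps_delta using \<epsilon> by blast
    have "continuous (at u) (\<lambda>v. pd 1 (pd 2 g) v \<bullet> c)"
      by (intro continuous_intros differentiable_imp_continuous_within c12)
    then obtain e2 where e2: "e2 > 0" "\<And>v. dist v u < e2 \<Longrightarrow> dist (pd 1 (pd 2 g) v \<bullet> c) ?B < \<epsilon>"
      unfolding continuous_at_eps_delta using \<epsilon> by blast
    define h where "h = min r (min e1 e2) / 3"
    have h: "h > 0" using r e1 e2 by (simp add: h_def)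
    have near: "dist (PP u a b) u < min r (min e1 e2)" if "0 \<le> a" "a \<le> h" "0 \<le> b" "b \<le> h" for a b
      using PP_near[OF that, of u] h unfolding h_def by linarith
    have sub: "PP u a b \<in> U" if "0 \<le> a" "a \<le> h" "0 \<le> b" "b \<le> h" for a b
      using near[OF that] r by (auto simp: dist_commute)
    obtain a b a' b' where ab: "0 < a" "a < h" "0 < b" "b < h" "0 < a'" "a' < h" "0 < b'" "b' < h"
      and eq: "pd 2 (pd 1 g) (PP u a b) \<bullet> c = pd 1 (pd 2 g) (PP u a' b') \<bullet> c"
      using schwarz_pts[OF h sub d0 d1 d2, of c] by blast
    have "dist (pd 2 (pd 1 g) (PP u a b) \<bullet> c) ?A < \<epsilon>"
      using e1(2) near[of a b] ab by auto
    moreover have "dist (pd 1 (pd 2 g) (PP u a' b') \<bullet> c) ?B < \<epsilon>"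
      using e2(2) near[of a' b'] ab by auto
    ultimately have "\<bar>?A - ?B\<bar> < 2 * \<epsilon>" using eq by (simp add: dist_real_def)
    then show False by (simp add: \<epsilon>_def)
  qed
  have "(pd 1 (pd 2 g) u - pd 2 (pd 1 g) u) \<bullet> (pd 1 (pd 2 g) u - pd 2 (pd 1 g) u) = 0"
    using key by (simp add: inner_diff_left)
  then show ?thesis by simp
qed




lemma mink_sym: "mink x y = mink y x" by (simp add: mink_def algebra_simps)
lemma mink_add_left: "mink (x + y) z = mink x z + mink y z" by (simp add: mink_def algebra_simps)
lemma mink_add_right: "mink z (x + y) = mink z x + mink z y" by (simp add: mink_def algebra_simps)
lemma mink_diff_left: "mink (x - y) z = mink x z - mink y z" by (simp add: mink_def algebra_simps)
lemma mink_diff_right: "mink z (x - y) = mink z x - mink z y" by (simp add: mink_def algebra_simps)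
lemma mink_scale_left: "mink (a *\<^sub>R x) z = a * mink x z" by (simp add: mink_def algebra_simps)
lemma mink_scale_right: "mink z (a *\<^sub>R x) = a * mink z x" by (simp add: mink_def algebra_simps)
lemma mink_minus_left: "mink (- x) z = - mink x z" by (simp add: mink_def algebra_simps)
lemma mink_minus_right: "mink z (- x) = - mink z x" by (simp add: mink_def algebra_simps)
lemma mink_zero_left: "mink 0 z = 0" by (simp add: mink_def)
lemma mink_zero_right: "mink z 0 = 0" by (simp add: mink_def)
lemma mink_sum_left: "mink (sum g S) z = (\<Sum>i\<in>S. mink (g i) z)"
  by (induction S rule: infinite_finite_induct) (auto simp: mink_zero_left mink_add_left)
lemma mink_sum_right: "mink z (sum g S) = (\<Sum>i\<in>S. mink z (g i))"
  by (induction S rule: infinite_finite_induct) (auto simp: mink_zero_right mink_add_right)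

lemmas mink_simps = mink_add_left mink_add_right mink_diff_left mink_diff_right mink_scale_left
  mink_scale_right mink_minus_left mink_minus_right mink_zero_left mink_zero_right

lemma bb_mink: "bounded_bilinear mink"
proof
  fix a a' b b' :: "real^4" and r :: real
  show "mink (a + a') b = mink a b + mink a' b" by (rule mink_add_left)
  show "mink a (b + b') = mink a b + mink a b'" by (rule mink_add_right)
  show "mink (r *\<^sub>R a) b = r *\<^sub>R mink a b" by (simp add: mink_scale_left)
  show "mink a (r *\<^sub>R b) = r *\<^sub>R mink a b" by (simp add: mink_scale_right)
next
  show "\<exists>K. \<forall>x y. norm (mink x y) \<le> norm x * norm y * K"
  proof (intro exI allI)
    fix x y :: "real^4"
    have c: "\<bar>x$i * y$i\<bar> \<le> norm x * norm y" for i
      using mult_mono[OF component_le_norm_cart[of x i] component_le_norm_cart[of y i]]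
      by (simp add: abs_mult)
    have "norm (mink x y) \<le> \<bar>x$1 * y$1\<bar> + \<bar>x$2 * y$2\<bar> + \<bar>x$3 * y$3\<bar> + \<bar>x$4 * y$4\<bar>"
      by (simp add: mink_def)
    also have "\<dots> \<le> norm x * norm y * 4" using c[of 1] c[of 2] c[of 3] c[of 4] by simp
    finally show "norm (mink x y) \<le> norm x * norm y * 4" .
  qed
qed

lemma has_derivative_mink:
  assumes "(A has_derivative A') (at x within s)" "(B has_derivative B') (at x within s)"
  shows "((\<lambda>v. mink (A v) (B v)) has_derivative (\<lambda>h. mink (A x) (B' h) + mink (A' h) (B x))) (at x within s)"
  using bounded_bilinear.FDERIV[OF bb_mink assms] .

lemma differentiable_mink [derivative_intros]:
  assumes "A differentiable (at x within s)" "B differentiable (at x within s)"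
  shows "(\<lambda>v. mink (A v) (B v)) differentiable (at x within s)"
  using assms has_derivative_mink unfolding differentiable_def by blast

lemma mink_deriv_eq:
  assumes U: "open U" "u \<in> U"
    and d: "A differentiable (at u)" "B differentiable (at u)" "C differentiable (at u)" "E differentiable (at u)"
    and eq: "\<forall>v\<in>U. mink (A v) (B v) = mink (C v) (E v)"
  shows "mink (frechet_derivative A (at u) h) (B u) + mink (A u) (frechet_derivative B (at u) h)
       = mink (frechet_derivative C (at u) h) (E u) + mink (C u) (frechet_derivative E (at u) h)"
proof -
  let ?A' = "frechet_derivative A (at u)" and ?B' = "frechet_derivative B (at u)"
  let ?C' = "frechet_derivative C (at u)" and ?E' = "frechet_derivative E (at u)"
  have h1: "((\<lambda>v. mink (A v) (B v) - mink (C v) (E v)) has_derivative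
     (\<lambda>h. (mink (A u) (?B' h) + mink (?A' h) (B u)) - (mink (C u) (?E' h) + mink (?C' h) (E u)))) (at u)"
    by (intro has_derivative_diff has_derivative_mink frechet_derivative_works[THEN iffD1] d)
  have h2: "((\<lambda>v. 0) has_derivative
     (\<lambda>h. (mink (A u) (?B' h) + mink (?A' h) (B u)) - (mink (C u) (?E' h) + mink (?C' h) (E u)))) (at u)"
    by (rule has_derivative_transform_within_open[OF h1 U]) (use eq in auto)
  have "(\<lambda>h. (mink (A u) (?B' h) + mink (?A' h) (B u)) - (mink (C u) (?E' h) + mink (?C' h) (E u))) = (\<lambda>h. 0)"
    using has_derivative_unique[OF h2 has_derivative_const] .
  then show ?thesis by (auto simp: fun_eq_iff) (metis add.commute eq_iff_diff_eq_0)
qed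

lemma two_ne: "(1::2) \<noteq> 2" by simp
lemma other_simps [simp]: "other 1 = 2" "other 2 = 1" by (auto simp: other_def)

lemma diff_tanp:
  assumes "pd 1 f differentiable (at u)" "pd 2 f differentiable (at u)" "gdet f u \<noteq> 0"
    "X differentiable (at u)"
  shows "(\<lambda>v. tanp f v (X v)) differentiable (at u)"
  using assms unfolding tanp_def ginv_def sum_2 gmet_def gdet_def
  by (simp add: derivative_intros)




lemma span2: "x \<in> span {a, b} \<longleftrightarrow> (\<exists>p q. x = p *\<^sub>R a + q *\<^sub>R b)"
  by (auto simp: span_insert span_singleton algebra_simps intro: exI[of _ "_"])

lemma cs3:
  fixes x2 x3 x4 y2 y3 y4 :: real
  shows "(x2*y2 + x3*y3 + x4*y4)^2 \<le> (x2^2+x3^2+x4^2) * (y2^2+y3^2+y4^2)"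
proof -
  have "(x2^2+x3^2+x4^2) * (y2^2+y3^2+y4^2) - (x2*y2 + x3*y3 + x4*y4)^2
     = (x2*y3 - x3*y2)^2 + (x2*y4 - x4*y2)^2 + (x3*y4 - x4*y3)^2"
    by (simp add: power2_eq_square algebra_simps)
  moreover have "(x2*y3 - x3*y2)^2 + (x2*y4 - x4*y2)^2 + (x3*y4 - x4*y3)^2 \<ge> 0" by simp
  ultimately show ?thesis by linarith
qed

lemma rcs:
  assumes e: "mink e e < 0" and ve: "mink v e = 0" and v: "v \<noteq> 0"
  shows "mink v v > 0"
proof (rule ccontr)
  assume "\<not> mink v v > 0"
  then have vv: "v$2^2 + v$3^2 + v$4^2 \<le> v$1^2" by (simp add: mink_def power2_eq_square)
  have ee: "e$2^2 + e$3^2 + e$4^2 < e$1^2" using e by (simp add: mink_def power2_eq_square)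
  have ve': "v$1 * e$1 = v$2*e$2 + v$3*e$3 + v$4*e$4" using ve by (simp add: mink_def)
  have "(v$1 * e$1)^2 \<le> (e$2^2 + e$3^2 + e$4^2) * (v$2^2 + v$3^2 + v$4^2)"
    unfolding ve' using cs3[of "e$2" "v$2" "e$3" "v$3" "e$4" "v$4"] by (simp add: algebra_simps)
  also have "\<dots> \<le> (e$2^2 + e$3^2 + e$4^2) * v$1^2"
    by (rule mult_left_mono[OF vv]) simp
  finally have "v$1^2 * (e$1^2 - (e$2^2 + e$3^2 + e$4^2)) \<le> 0"
    by (simp add: power_mult_distrib algebra_simps)
  moreover have "e$1^2 - (e$2^2 + e$3^2 + e$4^2) > 0" using ee by simp
  ultimately have "v$1^2 \<le> 0" by (simp add: mult_le_0_iff)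
  then have "v$1 = 0" by simp
  with vv have "v$2^2 + v$3^2 + v$4^2 \<le> 0" by simp
  then have "v$2 = 0" "v$3 = 0" "v$4 = 0"
    by (smt (verit) zero_le_power2 power_zero_numeral zero_eq_power2)+
  with \<open>v$1 = 0\<close> have "v = 0" by (simp add: vec_eq_iff forall_4)
  with v show False by simp
qed

lemma frame4:
  assumes "mink T T = 0" "mink W W = 0" "mink T W = -1"
    "mink T n1 = 0" "mink W n1 = 0" "mink T n2 = 0" "mink W n2 = 0"
    "mink n1 n1 = 1" "mink n2 n2 = 1" "mink n1 n2 = 0"
    and v: "mink v T = 0" "mink v W = 0" "mink v n1 = 0" "mink v n2 = 0"
  shows "v = 0"
proof -
  define F :: "4 \<Rightarrow> real^4" where "F i = (if i = 1 then T else if i = 2 then W else if i = 3 then n1 else n2)" for i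
  define L :: "real^4 \<Rightarrow> real^4" where "L x = (\<chi> i. mink x (F i))" for x
  have lin: "linear L"
    by (rule linearI) (simp_all add: L_def vec_eq_iff mink_add_left mink_scale_left)
  have F: "F 1 = T" "F 2 = W" "F 3 = n1" "F 4 = n2" by (simp_all add: F_def)
  have "L (- (y$2) *\<^sub>R T - (y$1) *\<^sub>R W + (y$3) *\<^sub>R n1 + (y$4) *\<^sub>R n2) = y" for y
    unfolding L_def vec_eq_iff forall_4 using assms
    by (simp add: F mink_simps mink_sym[of W T] mink_sym[of n1 T] mink_sym[of n2 T]
         mink_sym[of n1 W] mink_sym[of n2 W] mink_sym[of n2 n1])
  then have "surj L" by (metis surj_def)
  then have "inj L" using lin linear_surjective_imp_injective by blast
  moreover have "L v = L 0" using v by (simp add: L_def vec_eq_iff forall_4 F mink_zero_left)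
  ultimately show ?thesis by (simp add: inj_eq)
qed




lemma gmet_sym: "gmet f v 2 1 = gmet f v 1 2" by (simp add: gmet_def mink_sym)

lemma tanp_eq: "tanp f v x = tcoord f v x 1 *\<^sub>R pd 1 f v + tcoord f v x 2 *\<^sub>R pd 2 f v"
  by (simp add: tanp_def tcoord_def sum_2 algebra_simps)

lemma tcoord_2: "tcoord f v x i = ginv f v i 1 * mink x (pd 1 f v) + ginv f v i 2 * mink x (pd 2 f v)"
  by (simp add: tcoord_def sum_2)

lemma ginv_simps: "ginv f v 1 1 = gmet f v 2 2 / gdet f v" "ginv f v 2 2 = gmet f v 1 1 / gdet f v"
  "ginv f v 1 2 = - gmet f v 1 2 / gdet f v" "ginv f v 2 1 = - gmet f v 1 2 / gdet f v"
  by (simp_all add: ginv_def gmet_sym)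

lemma alg_inv:
  fixes g11 g12 g22 D p q :: real
  assumes "D = g11 * g22 - g12 * g12" "D \<noteq> 0"
  shows "g22 / D * (p * g11 + q * g12) + - g12 / D * (p * g12 + q * g22) = p"
    "- g12 / D * (p * g11 + q * g12) + g11 / D * (p * g12 + q * g22) = q"
  using assms by (simp_all add: field_simps) algebra+

lemma mink_pd: "mink (pd i f v) (pd j f v) = gmet f v i j" by (simp add: gmet_def)

lemma tcoord_basis:
  assumes "gdet f v \<noteq> 0"
  shows "tcoord f v (p *\<^sub>R pd 1 f v + q *\<^sub>R pd 2 f v) 1 = p"
    "tcoord f v (p *\<^sub>R pd 1 f v + q *\<^sub>R pd 2 f v) 2 = q"
proof -
  have D: "gdet f v = gmet f v 1 1 * gmet f v 2 2 - gmet f v 1 2 * gmet f v 1 2"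
    by (simp add: gdet_def gmet_sym)
  show "tcoord f v (p *\<^sub>R pd 1 f v + q *\<^sub>R pd 2 f v) 1 = p"
    "tcoord f v (p *\<^sub>R pd 1 f v + q *\<^sub>R pd 2 f v) 2 = q"
    using assms apply (simp_all add: tcoord_2 ginv_simps mink_simps mink_pd gmet_sym)
    apply (simp_all add: field_simps)
    using D apply algebra+ done
qed

lemma tcoord_add: "tcoord f v (x + y) i = tcoord f v x i + tcoord f v y i"
  by (simp add: tcoord_2 mink_simps algebra_simps)
lemma tcoord_scale: "tcoord f v (a *\<^sub>R x) i = a * tcoord f v x i"
  by (simp add: tcoord_2 mink_simps algebra_simps)

lemma mink_tanp:
  assumes "gdet f v \<noteq> 0"
  shows "mink (tanp f v x) (pd k f v) = mink x (pd k f v)"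
proof -
  have D: "gdet f v = gmet f v 1 1 * gmet f v 2 2 - gmet f v 1 2 * gmet f v 1 2"
    by (simp add: gdet_def gmet_sym)
  have "k = 1 \<or> k = 2" using exhaust_2 by blast
  then show ?thesis
    using assms
    apply (auto simp: ginv_simps tcoord_2 mink_simps mink_pd gmet_sym tanp_eq)
    apply (simp_all add: field_simps)
    apply (simp_all add: D algebra_simps) done
qed

lemma mink_norp:
  assumes "gdet f v \<noteq> 0"
  shows "mink (norp f v x) (pd k f v) = 0"
  using mink_tanp[OF assms] by (simp add: norp_def mink_simps)




lemma frame2_decomp:
  assumes T: "T = t1 *\<^sub>R a + t2 *\<^sub>R b" and T0: "T \<noteq> 0" and W: "W = w1 *\<^sub>R a + w2 *\<^sub>R b"
    and TT: "mink T T = 0" and WW: "mink W W = 0" and TW: "mink T W = -1"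
    and x: "x = p *\<^sub>R a + q *\<^sub>R b"
  shows "x = (- mink x W) *\<^sub>R T + (- mink x T) *\<^sub>R W"
proof -
  define \<delta> where "\<delta> = t1 * w2 - t2 * w1"
  have \<delta>: "\<delta> \<noteq> 0"
  proof
    assume d0: "\<delta> = 0"
    have "t1 *\<^sub>R W = w1 *\<^sub>R T" using d0 unfolding T W \<delta>_def by (simp add: algebra_simps)
    then have "t1 * mink T W = w1 * mink T T" by (metis mink_scale_right)
    then have "t1 = 0" using TT TW by simp
    have "t2 *\<^sub>R W = w2 *\<^sub>R T" using d0 unfolding T W \<delta>_def by (simp add: algebra_simps)
    then have "t2 * mink T W = w2 * mink T T" by (metis mink_scale_right)
    then have "t2 = 0" using TT TW by simp
    with \<open>t1 = 0\<close> T T0 show False by simp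
  qed
  define \<alpha> where "\<alpha> = (p * w2 - q * w1) / \<delta>"
  define \<beta> where "\<beta> = (q * t1 - p * t2) / \<delta>"
  have c1: "\<alpha> * t1 + \<beta> * w1 = p" using \<delta> by (simp add: \<alpha>_def \<beta>_def field_simps) (simp add: \<delta>_def algebra_simps)
  have c2: "\<alpha> * t2 + \<beta> * w2 = q" using \<delta> by (simp add: \<alpha>_def \<beta>_def field_simps) (simp add: \<delta>_def algebra_simps)
  have xe: "x = \<alpha> *\<^sub>R T + \<beta> *\<^sub>R W"
  proof -
    have "\<alpha> *\<^sub>R T + \<beta> *\<^sub>R W = (\<alpha> * t1 + \<beta> * w1) *\<^sub>R a + (\<alpha> * t2 + \<beta> * w2) *\<^sub>R b"
      unfolding T W by (simp add: algebra_simps)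
    then show ?thesis using c1 c2 x by simp
  qed
  have "mink x T = - \<beta>" unfolding xe using TT TW by (simp add: mink_simps mink_sym[of W T])
  moreover have "mink x W = - \<alpha>" unfolding xe using WW TW by (simp add: mink_simps)
  ultimately show ?thesis using xe by simp
qed

lemma frame2_exists:
  assumes D: "mink a a * mink b b - mink a b * mink a b \<noteq> 0"
    and T: "T = t1 *\<^sub>R a + t2 *\<^sub>R b" and T0: "T \<noteq> 0" and TT: "mink T T = 0"
  shows "\<exists>w1 w2. mink (w1 *\<^sub>R a + w2 *\<^sub>R b) (w1 *\<^sub>R a + w2 *\<^sub>R b) = 0
       \<and> mink T (w1 *\<^sub>R a + w2 *\<^sub>R b) = -1"
proof -
  define \<beta>1 where "\<beta>1 = mink T a"
  define \<beta>2 where "\<beta>2 = mink T b"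
  define Y where "Y = \<beta>1 *\<^sub>R a + \<beta>2 *\<^sub>R b"
  define s where "s = mink T Y"
  have s: "s = \<beta>1^2 + \<beta>2^2" by (simp add: s_def Y_def mink_simps \<beta>1_def \<beta>2_def power2_eq_square)
  have "s \<noteq> 0"
  proof
    assume "s = 0"
    then have b0: "\<beta>1 = 0" "\<beta>2 = 0" using s by (auto simp: add_nonneg_eq_0_iff)
    have e1: "t1 * mink a a + t2 * mink a b = 0" using b0(1) unfolding \<beta>1_def T
      by (simp add: mink_simps mink_sym[of b a])
    have e2: "t1 * mink a b + t2 * mink b b = 0" using b0(2) unfolding \<beta>2_def T
      by (simp add: mink_simps)
    have "t1 * (mink a a * mink b b - mink a b * mink a b) = 0"
      using e1 e2 by algebra
    then have "t1 = 0" using D by simp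
    have "t2 * (mink a a * mink b b - mink a b * mink a b) = 0"
      using e1 e2 by algebra
    then have "t2 = 0" using D by simp
    with \<open>t1 = 0\<close> T T0 show False by simp
  qed
  define \<beta> where "\<beta> = - 1 / s"
  define \<alpha> where "\<alpha> = - \<beta> * mink Y Y / (2 * s)"
  define W where "W = \<alpha> *\<^sub>R T + \<beta> *\<^sub>R Y"
  have YT: "mink Y T = s" by (simp add: s_def mink_sym)
  have "mink W W = 2 * \<alpha> * \<beta> * s + \<beta>^2 * mink Y Y"
    unfolding W_def using TT YT by (simp add: mink_simps s_def power2_eq_square algebra_simps)
  also have "\<dots> = 0" using \<open>s \<noteq> 0\<close> by (simp add: \<alpha>_def power2_eq_square field_simps)
  finally have WW: "mink W W = 0" .
  have TW: "mink T W = -1" unfolding W_def using TT \<open>s \<noteq> 0\<close>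
    by (simp add: mink_simps s_def[symmetric] \<beta>_def)
  have "W = (\<alpha> * t1 + \<beta> * \<beta>1) *\<^sub>R a + (\<alpha> * t2 + \<beta> * \<beta>2) *\<^sub>R b"
    unfolding W_def T Y_def by (simp add: algebra_simps)
  then show ?thesis using WW TW by metis
qed




context
  fixes f :: "real^2 \<Rightarrow> real^4" and U :: "(real^2) set" and Z :: "real^4" and u :: "real^2"
  assumes oU: "open U" and sm: "smooth_on_param U f" and tl: "timelike_param U f"
    and ZZ: "mink Z Z = 1" and cn: "canonical_null U f Z"
    and IIne: "\<forall>v\<in>U. IIf f v (tanp f v Z) (tanp f v Z) \<noteq> 0" and uU: "u \<in> U"
begin

lemma dpds: "v \<in> U \<Longrightarrow> pds ks f differentiable (at v)"
  using sm unfolding smooth_on_param_def by blast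

lemma dpd1: "v \<in> U \<Longrightarrow> pd i f differentiable (at v)"
  using dpds[of v "[i]"] by simp
lemma dpd2: "v \<in> U \<Longrightarrow> pd i (pd j f) differentiable (at v)"
  using dpds[of v "[i,j]"] by simp
lemma dpd3: "v \<in> U \<Longrightarrow> pd i (pd j (pd k f)) differentiable (at v)"
  using dpds[of v "[i,j,k]"] by simp
lemma dpd4: "v \<in> U \<Longrightarrow> pd i (pd j (pd k (pd l f))) differentiable (at v)"
  using dpds[of v "[i,j,k,l]"] by simp
lemma df: "v \<in> U \<Longrightarrow> f differentiable (at v)"
  using dpds[of v "[]"] by simp

lemma Dne: "v \<in> U \<Longrightarrow> gdet f v \<noteq> 0"
  using tl unfolding timelike_param_def by force

lemma Du: "gdet f u < 0" using tl uU unfolding timelike_param_def by blast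

lemma sym2: "pd 1 (pd 2 f) u = pd 2 (pd 1 f) u"
  by (rule schwarz[OF oU uU]) (auto intro: df dpd1 dpd2 uU)

lemma sym3: "pd 1 (pd 2 (pd 2 f)) u = pd 2 (pd 1 (pd 2 f)) u"
  by (rule schwarz[OF oU uU]) (auto intro: dpd1 dpd2 dpd3 uU)

abbreviation "f1 \<equiv> pd 1 f u"
abbreviation "f2 \<equiv> pd 2 f u"
abbreviation "TT \<equiv> tanp f u Z"
abbreviation "t1 \<equiv> tcoord f u Z 1"
abbreviation "t2 \<equiv> tcoord f u Z 2"
abbreviation "Zp \<equiv> norp f u Z"

lemma T_eq: "TT = t1 *\<^sub>R f1 + t2 *\<^sub>R f2" by (rule tanp_eq)
lemma T0: "TT \<noteq> 0" using cn uU unfolding canonical_null_def by blast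
lemma TTnull: "mink TT TT = 0" using cn uU unfolding canonical_null_def by blast

lemma tcoord_T: "tcoord f u TT 1 = t1" "tcoord f u TT 2 = t2"
  using tcoord_basis[OF Dne[OF uU]] T_eq by metis+

lemma Zp_f: "mink Zp (pd k f u) = 0" by (rule mink_norp[OF Dne[OF uU]])

lemma orth_span: "mink x f1 = 0 \<Longrightarrow> mink x f2 = 0 \<Longrightarrow> mink x (p *\<^sub>R f1 + q *\<^sub>R f2) = 0"
  by (simp add: mink_simps)

lemma Zp_T: "mink Zp TT = 0" using orth_span[OF Zp_f Zp_f] T_eq by metis

lemma Zp_eq: "Zp = Z - TT" by (simp add: norp_def)

lemma ZpZp: "mink Zp Zp = 1"
proof -
  have "mink Z TT = 0" using Zp_T TTnull by (simp add: Zp_eq mink_simps)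
  then show ?thesis using ZZ TTnull by (simp add: Zp_eq mink_simps mink_sym[of TT Z])
qed

lemma D_form: "mink f1 f1 * mink f2 f2 - mink f1 f2 * mink f1 f2 \<noteq> 0"
  using Dne[OF uU] by (simp add: gdet_def gmet_def mink_sym[of f2 f1])

lemma TS_iff: "x \<in> TS f u \<longleftrightarrow> (\<exists>p q. x = p *\<^sub>R f1 + q *\<^sub>R f2)"
  by (simp add: TS_def span2)

lemma W_props: "\<exists>w1 w2. Wf f Z u = w1 *\<^sub>R f1 + w2 *\<^sub>R f2 \<and> mink (Wf f Z u) (Wf f Z u) = 0
    \<and> mink TT (Wf f Z u) = -1"
proof -
  obtain w1 w2 where W0: "mink (w1 *\<^sub>R f1 + w2 *\<^sub>R f2) (w1 *\<^sub>R f1 + w2 *\<^sub>R f2) = 0"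
      "mink TT (w1 *\<^sub>R f1 + w2 *\<^sub>R f2) = -1"
    using frame2_exists[OF D_form T_eq T0 TTnull] by blast
  define W where "W = w1 *\<^sub>R f1 + w2 *\<^sub>R f2"
  have "Wf f Z u = W"
    unfolding Wf_def
  proof (rule the_equality)
    show "W \<in> TS f u \<and> W \<noteq> 0 \<and> mink W W = 0 \<and> mink TT W = -1"
      using W0 by (auto simp: W_def TS_iff mink_zero_right)
  next
    fix w assume w: "w \<in> TS f u \<and> w \<noteq> 0 \<and> mink w w = 0 \<and> mink TT w = -1"
    then obtain p q where pq: "w = p *\<^sub>R f1 + q *\<^sub>R f2" using TS_iff by blast
    have dec: "w = (- mink w W) *\<^sub>R TT + (- mink w TT) *\<^sub>R W"
      by (rule frame2_decomp[OF T_eq T0 W_def TTnull W0[folded W_def] pq])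
    have wT: "mink w TT = -1" using w by (simp add: mink_sym)
    define \<alpha> where "\<alpha> = - mink w W"
    have dec': "w = \<alpha> *\<^sub>R TT + 1 *\<^sub>R W" using dec wT \<alpha>_def by simp
    have "mink w w = 2 * \<alpha> * mink TT W"
      by (subst (1 2) dec') (use TTnull W0[folded W_def] in \<open>simp add: mink_simps mink_sym[of W TT] algebra_simps\<close>)
    then have "\<alpha> = 0" using w W0[folded W_def] by simp
    then have "mink w W = 0" by (simp add: \<alpha>_def)
    then show "w = W" using dec wT by simp
  qed
  then show ?thesis using W0 by (auto simp: W_def)
qed

abbreviation "WW \<equiv> Wf f Z u"

lemma WWnull: "mink WW WW = 0" using W_props by blast
lemma TW: "mink TT WW = -1" using W_props by blast
lemma WT: "mink WW TT = -1" using TW by (simp add: mink_sym)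
lemma W_coords: "\<exists>w1 w2. WW = w1 *\<^sub>R f1 + w2 *\<^sub>R f2" using W_props by blast

lemma T_TS: "TT \<in> TS f u" using T_eq TS_iff by blast
lemma W_TS: "WW \<in> TS f u" using W_coords TS_iff by blast

lemma decomp: "x \<in> TS f u \<Longrightarrow> x = (- mink x WW) *\<^sub>R TT + (- mink x TT) *\<^sub>R WW"
proof -
  assume "x \<in> TS f u"
  then obtain p q where pq: "x = p *\<^sub>R f1 + q *\<^sub>R f2" using TS_iff by blast
  obtain w1 w2 where w: "WW = w1 *\<^sub>R f1 + w2 *\<^sub>R f2" using W_coords by blast
  show ?thesis by (rule frame2_decomp[OF T_eq T0 w TTnull WWnull TW pq])
qed

abbreviation "NN i j \<equiv> norp f u (pd i (pd j f) u)"

lemma II_basis: "IIf f u (p *\<^sub>R f1 + q *\<^sub>R f2) (r *\<^sub>R f1 + w *\<^sub>R f2)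
   = (p*r) *\<^sub>R NN 1 1 + (p*w) *\<^sub>R NN 1 2 + (q*r) *\<^sub>R NN 2 1 + (q*w) *\<^sub>R NN 2 2"
  by (simp add: IIf_def sum_2 tcoord_basis[OF Dne[OF uU]])

lemma II_lin_left: "IIf f u (a *\<^sub>R x + b *\<^sub>R y) z = a *\<^sub>R IIf f u x z + b *\<^sub>R IIf f u y z"
  by (simp add: IIf_def sum_2 tcoord_add tcoord_scale algebra_simps)

lemma II_lin_right: "IIf f u z (a *\<^sub>R x + b *\<^sub>R y) = a *\<^sub>R IIf f u z x + b *\<^sub>R IIf f u z y"
  by (simp add: IIf_def sum_2 tcoord_add tcoord_scale algebra_simps)

lemma NN_sym: "NN 1 2 = NN 2 1" using sym2 by simp

lemma II_sym: "IIf f u x y = IIf f u y x"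
  by (simp add: IIf_def sum_2 NN_sym algebra_simps)

lemma II_normal_f: "mink (IIf f u x y) (pd k f u) = 0"
  by (simp add: IIf_def sum_2 mink_simps mink_norp[OF Dne[OF uU]])

lemma normal_TS: "mink v f1 = 0 \<Longrightarrow> mink v f2 = 0 \<Longrightarrow> x \<in> TS f u \<Longrightarrow> mink v x = 0"
  using TS_iff by (auto simp: mink_simps)

lemma II_normal: "x \<in> TS f u \<Longrightarrow> mink (IIf f u a b) x = 0"
  by (rule normal_TS[OF II_normal_f II_normal_f])

lemma Zp_TS: "x \<in> TS f u \<Longrightarrow> mink Zp x = 0"
  by (rule normal_TS[OF Zp_f Zp_f])

lemma tanp_TS: "tanp f u x \<in> TS f u" using tanp_eq TS_iff by blast

lemma NN_Zp: "mink (NN i k) Zp = mink Zp (pd i (pd k f) u)"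
  using Zp_TS[OF tanp_TS] by (simp add: norp_def mink_simps mink_sym)

lemma fd_const: "frechet_derivative (\<lambda>v. c) (at x) = (\<lambda>h. 0)"
  by (rule frechet_derivative_at[OF has_derivative_const, symmetric])

lemma dZ: "t1 * mink (NN i 1) Zp + t2 * mink (NN i 2) Zp = 0"
proof -
  have dT: "(\<lambda>v. tanp f v Z) differentiable (at u)"
    by (rule diff_tanp[OF dpd1[OF uU] dpd1[OF uU] Dne[OF uU] differentiable_const])
  define T' where "T' = frechet_derivative (\<lambda>v. tanp f v Z) (at u) (axis i 1)"
  have k: "mink T' (pd k f u) = mink Zp (pd i (pd k f) u)" for k
  proof -
    have "mink T' (pd k f u) + mink TT (pd i (pd k f) u) = mink 0 (pd k f u) + mink Z (pd i (pd k f) u)"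
      using mink_deriv_eq[OF oU uU dT dpd1[OF uU, of k] differentiable_const[of Z] dpd1[OF uU, of k],
          where h = "axis i 1"] mink_tanp[OF Dne] 
      by (simp add: T'_def pd_def fd_const)
    then show ?thesis by (simp add: Zp_eq mink_simps)
  qed
  have "mink T' TT + mink TT T' = 0"
    using mink_deriv_eq[OF oU uU dT dT differentiable_const[of 0] differentiable_const[of 0],
        where h = "axis i 1"] cn unfolding canonical_null_def
    by (simp add: T'_def fd_const mink_zero_left)
  then have "mink T' TT = 0" by (simp add: mink_sym[of TT T'])
  then have "t1 * mink T' f1 + t2 * mink T' f2 = 0"
    by (subst (asm) T_eq) (simp add: mink_simps)
  then show ?thesis using k[of 1] k[of 2] by (simp add: NN_Zp)
qed

lemma norp_tanp: "mink (norp f u x) (tanp f u y) = 0"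
  by (rule normal_TS[OF mink_norp[OF Dne[OF uU]] mink_norp[OF Dne[OF uU]] tanp_TS])

lemma mink_norp_any: "mink (norp f u x) y = mink (norp f u x) (norp f u y)"
  using norp_tanp[of x y] by (simp add: norp_def[of f u y] mink_simps)

lemma gauss_f: "mink (riem122 f u) f1 = mink (NN 2 2) (NN 1 1) - mink (NN 1 2) (NN 1 2)"
proof -
  define V2 where "V2 = (\<lambda>v. tanp f v (pd 2 (pd 2 f) v))"
  define V1 where "V1 = (\<lambda>v. tanp f v (pd 1 (pd 2 f) v))"
  have dV2: "V2 differentiable (at u)" unfolding V2_def
    by (rule diff_tanp[OF dpd1[OF uU] dpd1[OF uU] Dne[OF uU] dpd2[OF uU]])
  have dV1: "V1 differentiable (at u)" unfolding V1_def
    by (rule diff_tanp[OF dpd1[OF uU] dpd1[OF uU] Dne[OF uU] dpd2[OF uU]])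
  have r: "mink (riem122 f u) f1 = mink (pd 1 V2 u) f1 - mink (pd 2 V1 u) f1"
    by (simp add: riem122_def covd_def V1_def[symmetric] V2_def[symmetric] mink_simps mink_tanp[OF Dne[OF uU]])
  have e1: "mink (pd 1 V2 u) f1 + mink (V2 u) (pd 1 (pd 1 f) u)
      = mink (pd 1 (pd 2 (pd 2 f)) u) f1 + mink (pd 2 (pd 2 f) u) (pd 1 (pd 1 f) u)"
    using mink_deriv_eq[OF oU uU dV2 dpd1[OF uU, of 1] dpd2[OF uU, of 2 2] dpd1[OF uU, of 1],
        where h = "axis 1 1"] mink_tanp[OF Dne]
    by (simp add: V2_def pd_def)
  have e2: "mink (pd 2 V1 u) f1 + mink (V1 u) (pd 2 (pd 1 f) u)
      = mink (pd 2 (pd 1 (pd 2 f)) u) f1 + mink (pd 1 (pd 2 f) u) (pd 2 (pd 1 f) u)"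
    using mink_deriv_eq[OF oU uU dV1 dpd1[OF uU, of 1] dpd2[OF uU, of 1 2] dpd1[OF uU, of 1],
        where h = "axis 2 1"] mink_tanp[OF Dne]
    by (simp add: V1_def pd_def)
  have n22: "pd 2 (pd 2 f) u - V2 u = NN 2 2" by (simp add: V2_def norp_def)
  have n12: "pd 1 (pd 2 f) u - V1 u = NN 1 2" by (simp add: V1_def norp_def)
  have "mink (riem122 f u) f1 = mink (NN 2 2) (pd 1 (pd 1 f) u) - mink (NN 1 2) (pd 2 (pd 1 f) u)"
    using r e1 e2 sym3 by (simp add: n22[symmetric] n12[symmetric] mink_simps)
  also have "\<dots> = mink (NN 2 2) (NN 1 1) - mink (NN 1 2) (NN 1 2)"
    by (subst (1 2) mink_norp_any) (simp add: sym2)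
  finally show ?thesis .
qed

lemma alg_frame:
  fixes g11 g12 g22 t1 t2 w1 w2 :: real
  assumes "t1*t1*g11 + 2*t1*t2*g12 + t2*t2*g22 = 0" "w1*w1*g11 + 2*w1*w2*g12 + w2*w2*g22 = 0"
    "t1*w1*g11 + (t1*w2 + t2*w1)*g12 + t2*w2*g22 = -1"
  shows "g22 = -2*t1*w1*(g11*g22 - g12*g12)" "g11 = -2*t2*w2*(g11*g22 - g12*g12)"
     "- g12 = -(t1*w2+t2*w1)*(g11*g22 - g12*g12)" "(t1*w2 - t2*w1)^2 * (g11*g22 - g12*g12) = -1"
  using assms by algebra+

lemma quad: "mink (a *\<^sub>R f1 + b *\<^sub>R f2) (c *\<^sub>R f1 + d *\<^sub>R f2)
    = a*c*mink f1 f1 + (a*d + b*c)*mink f1 f2 + b*d*mink f2 f2"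
  by (simp add: mink_simps mink_sym[of f2 f1] algebra_simps)

lemma coords: "\<exists>w1 w2. WW = w1 *\<^sub>R f1 + w2 *\<^sub>R f2
  \<and> t1*t1*mink f1 f1 + 2*t1*t2*mink f1 f2 + t2*t2*mink f2 f2 = 0
  \<and> w1*w1*mink f1 f1 + 2*w1*w2*mink f1 f2 + w2*w2*mink f2 f2 = 0
  \<and> t1*w1*mink f1 f1 + (t1*w2 + t2*w1)*mink f1 f2 + t2*w2*mink f2 f2 = -1"
proof -
  obtain w1 w2 where w: "WW = w1 *\<^sub>R f1 + w2 *\<^sub>R f2" using W_coords by blast
  have "mink TT TT = t1*t1*mink f1 f1 + 2*t1*t2*mink f1 f2 + t2*t2*mink f2 f2"
    by (subst (1 2) T_eq, subst quad) (simp add: algebra_simps)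
  moreover have "mink WW WW = w1*w1*mink f1 f1 + 2*w1*w2*mink f1 f2 + w2*w2*mink f2 f2"
    by (subst (1 2) w, subst quad) (simp add: algebra_simps)
  moreover have "mink TT WW = t1*w1*mink f1 f1 + (t1*w2 + t2*w1)*mink f1 f2 + t2*w2*mink f2 f2"
    by (subst T_eq, subst w, subst quad) (simp add: algebra_simps)
  ultimately show ?thesis using w TTnull WWnull TW by auto
qed

lemma gdet_u: "gdet f u = mink f1 f1 * mink f2 f2 - mink f1 f2 * mink f1 f2"
  by (simp add: gdet_def gmet_def mink_sym[of f2 f1])

lemma half2: fixes v :: "real^4" shows "(c / 2) *\<^sub>R (2 * v) = c *\<^sub>R v"
  by (simp add: vec_eq_iff)

lemma H_eq: "meanH f u = - IIf f u TT WW"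
proof -
  obtain w1 w2 where w: "WW = w1 *\<^sub>R f1 + w2 *\<^sub>R f2"
    and c: "t1*t1*mink f1 f1 + 2*t1*t2*mink f1 f2 + t2*t2*mink f2 f2 = 0"
      "w1*w1*mink f1 f1 + 2*w1*w2*mink f1 f2 + w2*w2*mink f2 f2 = 0"
      "t1*w1*mink f1 f1 + (t1*w2 + t2*w1)*mink f1 f2 + t2*w2*mink f2 f2 = -1"
    using coords by blast
  note a = alg_frame[OF c]
  have D: "gdet f u \<noteq> 0" by (rule Dne[OF uU])
  have g: "ginv f u 1 1 = -2*t1*w1" "ginv f u 2 2 = -2*t2*w2" "ginv f u 1 2 = -(t1*w2+t2*w1)"
      "ginv f u 2 1 = -(t1*w2+t2*w1)"
    using D a(1-3) by (simp_all add: ginv_simps gmet_def gdet_u field_simps)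
  show ?thesis
    unfolding meanH_def sum_2 g w
    by (subst T_eq, subst II_basis) (simp add: NN_sym algebra_simps half2)
qed

lemma K_eq: "gaussK f u = mink (IIf f u TT WW) (IIf f u TT WW) - mink (IIf f u TT TT) (IIf f u WW WW)"
proof -
  obtain w1 w2 where w: "WW = w1 *\<^sub>R f1 + w2 *\<^sub>R f2"
    and c: "t1*t1*mink f1 f1 + 2*t1*t2*mink f1 f2 + t2*t2*mink f2 f2 = 0"
      "w1*w1*mink f1 f1 + 2*w1*w2*mink f1 f2 + w2*w2*mink f2 f2 = 0"
      "t1*w1*mink f1 f1 + (t1*w2 + t2*w1)*mink f1 f2 + t2*w2*mink f2 f2 = -1"
    using coords by blast
  note a = alg_frame[OF c]
  have D: "gdet f u \<noteq> 0" by (rule Dne[OF uU])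
  have "gaussK f u = (mink (NN 2 2) (NN 1 1) - mink (NN 1 2) (NN 1 2)) / gdet f u"
    by (simp add: gaussK_def gauss_f)
  also have "\<dots> = - ((t1*w2 - t2*w1) * (t1*w2 - t2*w1)) * (mink (NN 2 2) (NN 1 1) - mink (NN 1 2) (NN 1 2))"
    using D a(4) unfolding gdet_u[symmetric] by (simp add: field_simps power2_eq_square) algebra
  also have "\<dots> = mink (IIf f u TT WW) (IIf f u TT WW) - mink (IIf f u TT TT) (IIf f u WW WW)"
    unfolding w T_eq
    apply (simp only: II_basis NN_sym)
    apply (simp add: mink_simps mink_sym[of "NN 2 1" "NN 1 1"] mink_sym[of "NN 2 2" "NN 1 1"]
       mink_sym[of "NN 2 2" "NN 2 1"])
    apply (simp add: power2_eq_square algebra_simps)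
    done
  finally show ?thesis .
qed

lemma TS_comb: "a *\<^sub>R TT + b *\<^sub>R WW \<in> TS f u"
  using T_TS W_TS unfolding TS_def by (intro span_add span_scale)

lemma shape_eq: "shape f u \<xi> X = (- mink (IIf f u X WW) \<xi>) *\<^sub>R TT + (- mink (IIf f u X TT) \<xi>) *\<^sub>R WW"
  unfolding shape_def
proof (rule the_equality)
  let ?c = "(- mink (IIf f u X WW) \<xi>) *\<^sub>R TT + (- mink (IIf f u X TT) \<xi>) *\<^sub>R WW"
  have "mink ?c Y = mink (IIf f u X Y) \<xi>" if Y: "Y \<in> TS f u" for Y
  proof -
    define a where "a = - mink Y WW"
    define b where "b = - mink Y TT"
    have Ye: "Y = a *\<^sub>R TT + b *\<^sub>R WW" using decomp[OF Y] a_def b_def by simp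
    show ?thesis unfolding Ye II_lin_right
      using TTnull WWnull TW WT by (simp add: mink_simps algebra_simps)
  qed
  then show "?c \<in> TS f u \<and> (\<forall>Y\<in>TS f u. mink ?c Y = mink (IIf f u X Y) \<xi>)"
    using TS_comb by blast
next
  fix v assume v: "v \<in> TS f u \<and> (\<forall>Y\<in>TS f u. mink v Y = mink (IIf f u X Y) \<xi>)"
  then have "mink v WW = mink (IIf f u X WW) \<xi>" "mink v TT = mink (IIf f u X TT) \<xi>"
    using T_TS W_TS by auto
  then show "v = (- mink (IIf f u X WW) \<xi>) *\<^sub>R TT + (- mink (IIf f u X TT) \<xi>) *\<^sub>R WW"
    using decomp v by metis
qed

abbreviation "AA \<equiv> IIf f u TT TT"
abbreviation "BB \<equiv> IIf f u TT WW"
abbreviation "CC \<equiv> IIf f u WW WW"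

lemma shape_TW: "shape f u \<xi> (\<alpha> *\<^sub>R TT + \<beta> *\<^sub>R WW)
   = (- (\<alpha> * mink BB \<xi> + \<beta> * mink CC \<xi>)) *\<^sub>R TT + (- (\<alpha> * mink AA \<xi> + \<beta> * mink BB \<xi>)) *\<^sub>R WW"
  unfolding shape_eq II_lin_left using II_sym[of WW TT] by (simp add: mink_simps)

lemma fT_Zp: "mink (IIf f u (pd i f u) TT) Zp = 0"
proof -
  have e1: "IIf f u (pd 1 f u) TT = t1 *\<^sub>R NN 1 1 + t2 *\<^sub>R NN 1 2"
    using II_basis[of 1 0 t1 t2] T_eq by simp
  have e2: "IIf f u (pd 2 f u) TT = t1 *\<^sub>R NN 2 1 + t2 *\<^sub>R NN 2 2"
    using II_basis[of 0 1 t1 t2] T_eq by simp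
  have "i = 1 \<or> i = 2" using exhaust_2 by blast
  then show ?thesis using dZ[of 1] dZ[of 2] e1 e2 by (auto simp: mink_simps)
qed

lemma TS_Zp: "x \<in> TS f u \<Longrightarrow> mink (IIf f u x TT) Zp = 0"
  using fT_Zp[of 1] fT_Zp[of 2] by (auto simp: TS_iff II_lin_left mink_simps)

lemma AZp: "mink AA Zp = 0" by (rule TS_Zp[OF T_TS])
lemma BZp: "mink BB Zp = 0" using TS_Zp[OF W_TS] II_sym[of WW TT] by simp

lemma AApos: "mink AA AA > 0"
proof (rule rcs)
  show "mink (TT + WW) (TT + WW) < 0" using TTnull WWnull TW WT by (simp add: mink_simps)
  show "mink AA (TT + WW) = 0" using TS_comb[of 1 1] II_normal by simp
  show "AA \<noteq> 0" using IIne uU by blast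
qed

abbreviation "aa \<equiv> lnorm AA"
lemma aa_pos: "aa > 0" using AApos by (simp add: lnorm_def)
lemma aa_sq: "aa * aa = mink AA AA" using AApos by (simp add: lnorm_def)

abbreviation "nu \<equiv> nuf f Z u"
lemma nu_eq: "nu = (1 / aa) *\<^sub>R AA" by (simp add: nuf_def)
lemma Anu: "mink AA nu = aa" unfolding nu_eq using aa_pos aa_sq
  by (simp add: mink_simps) (metis nonzero_mult_div_cancel_left order_less_irrefl)

lemma e1_eq: "e1f f Z u = (1 / sqrt 2) *\<^sub>R TT + (1 / sqrt 2) *\<^sub>R WW"
  by (simp add: e1f_def scaleR_add_right)
lemma e2_eq: "e2f f Z u = (1 / sqrt 2) *\<^sub>R TT + (- (1 / sqrt 2)) *\<^sub>R WW"
  by (simp add: e2f_def scaleR_diff_right)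

lemma KN_eq: "KNf f Z u = mink CC Zp * aa"
proof -
  have "KNf f Z u = mink CC Zp * mink AA nu"
    unfolding KNf_def e1_eq e2_eq shape_TW AZp BZp
    using TTnull WWnull TW WT
    by (simp add: mink_simps algebra_simps)
  then show ?thesis using Anu by simp
qed

lemma nu_T: "mink nu TT = 0" "mink nu WW = 0"
  unfolding nu_eq using II_normal[OF T_TS] II_normal[OF W_TS] by (simp_all add: mink_simps)
lemma nu_nu: "mink nu nu = 1"
  unfolding nu_eq using aa_pos aa_sq AApos by (simp add: mink_simps field_simps)
lemma Zp_nu: "mink Zp nu = 0"
  unfolding nu_eq using AZp by (simp add: mink_simps mink_sym[of Zp AA])
lemma X_eq: "mink (meanH f u) (meanH f u) - gaussK f u = mink AA CC"
  by (simp add: H_eq K_eq mink_simps)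

lemma final:
  "CC = (KNf f Z u / aa) *\<^sub>R Zp + ((mink (meanH f u) (meanH f u) - gaussK f u) / aa) *\<^sub>R nu
   \<and> mink CC CC * aa\<^sup>2 = (mink (meanH f u) (meanH f u) - gaussK f u)\<^sup>2 + (KNf f Z u)\<^sup>2"
proof -
  define c1 where "c1 = mink CC Zp"
  define c2 where "c2 = mink CC nu"
  have c1e: "c1 = KNf f Z u / aa" using KN_eq aa_pos by (simp add: c1_def)
  have c2e: "c2 = (mink (meanH f u) (meanH f u) - gaussK f u) / aa"
    unfolding X_eq c2_def nu_eq by (simp add: mink_simps mink_sym[of CC AA])
  define v where "v = CC - c1 *\<^sub>R Zp - c2 *\<^sub>R nu"
  have TZp: "mink TT Zp = 0" using Zp_T by (simp add: mink_sym)
  have WZp: "mink WW Zp = 0" using Zp_TS[OF W_TS] by (simp add: mink_sym)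
  have CT: "mink CC TT = 0" "mink CC WW = 0" using II_normal[OF T_TS] II_normal[OF W_TS] by auto
  have "v = 0"
  proof (rule frame4[of TT WW Zp nu])
    show "mink TT TT = 0" "mink WW WW = 0" "mink TT WW = -1" "mink TT Zp = 0" "mink WW Zp = 0"
      "mink TT nu = 0" "mink WW nu = 0" "mink Zp Zp = 1" "mink nu nu = 1" "mink Zp nu = 0"
      using TTnull WWnull TW TZp WZp nu_T ZpZp nu_nu Zp_nu by (simp_all add: mink_sym)
    show "mink v TT = 0" "mink v WW = 0"
      unfolding v_def using CT Zp_T WZp nu_T by (simp_all add: mink_simps mink_sym[of WW Zp])
    show "mink v Zp = 0" "mink v nu = 0"
      unfolding v_def using ZpZp nu_nu Zp_nu
      by (simp_all add: mink_simps c1_def c2_def mink_sym[of nu Zp])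
  qed
  then have Ce: "CC = c1 *\<^sub>R Zp + c2 *\<^sub>R nu" by (simp add: v_def algebra_simps)
  have "mink CC CC = c1 * c1 + c2 * c2"
    by (subst (1 2) Ce) (simp add: mink_simps ZpZp nu_nu Zp_nu mink_sym[of nu Zp] algebra_simps)
  then have "mink CC CC * aa\<^sup>2 = (c1 * aa)^2 + (c2 * aa)^2"
    by (simp add: power2_eq_square algebra_simps)
  also have "\<dots> = (mink (meanH f u) (meanH f u) - gaussK f u)\<^sup>2 + (KNf f Z u)\<^sup>2"
    using c1e c2e aa_pos by (simp add: add.commute)
  finally show ?thesis using Ce c1e c2e by simp
qed

end

theorem mainTheorem14:
  fixes f :: "real^2 \<Rightarrow> real^4" and U :: "(real^2) set" and Z :: "real^4" and u :: "real^2"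
  assumes "open U"
    and "smooth_on_param U f"
    and "timelike_param U f"
    and "mink Z Z = 1"
    and "canonical_null U f Z"
    and "\<forall>v\<in>U. IIf f v (tanp f v Z) (tanp f v Z) \<noteq> 0"
    and "u \<in> U"
  shows "IIf f u (Wf f Z u) (Wf f Z u)
           = (KNf f Z u / lnorm (IIf f u (tanp f u Z) (tanp f u Z))) *\<^sub>R norp f u Z
             + ((mink (meanH f u) (meanH f u) - gaussK f u)
                 / lnorm (IIf f u (tanp f u Z) (tanp f u Z))) *\<^sub>R nuf f Z u
         \<and> mink (IIf f u (Wf f Z u) (Wf f Z u)) (IIf f u (Wf f Z u) (Wf f Z u))
             * (lnorm (IIf f u (tanp f u Z) (tanp f u Z)))\<^sup>2
           = (mink (meanH f u) (meanH f u) - gaussK f u)\<^sup>2 + (KNf f Z u)\<^sup>2"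
    by (rule final[OF assms])

end
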